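(* Let $n$ be an even nonnegative integer, and let $\mathbf n=\mathbf n_1\cdots\mathbf n_r$ be the block decomposition of its minimal hyperbinary expansion ($r=0$ if $n=0$). Let $(a_1,\dots,a_r)$ be the lengths of the blocks as words, and let $(t_1,\dots,t_r)\in\{1,2\}^r$ be their types. Define functions on triples of integers: \[b_1(\alpha,\beta,\sigma)=\alpha\beta+\sigma,\qquad b_2(\alpha,\beta,\sigma)=\beta+\alpha\sigma,\] \[s_1(\alpha,\beta,\sigma)=(\alpha-1)\beta+\sigma,\qquad s_2(\alpha,\beta,\sigma)=\sigma.\] Set $h_0=k_0=1$, and for $i\in\{0,\dots,r-1\}$ set \[h_{i+1}=b_{t_{r-i}}(a_{r-i},h_i,k_i),\qquad k_{i+1}=s_{t_{r-i}}(a_{r-i},h_i,k_i).\] Then $b(n)=h_r$.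
   Context: A hyperbinary expansion of a nonnegative integer $m$ is a word $x_0\cdots x_k$ over $\{0,1,2\}$ with $x_0\ne0$ and $\sum_i x_i2^{k-i}=m$; the empty word is the unique hyperbinary expansion of $0$. $b(m)$ is the number of hyperbinary expansions of $m$. The minimal hyperbinary expansion of $m$ is its unique hyperbinary expansion with no digit $0$. A block of type $1$ is a word $1^t2$ (length $t+1$) and a block of type $2$ is a word $2^t$ (length $t$), with $t\ge1$. The minimal hyperbinary expansion of a positive even integer can be written uniquely as a concatenation of blocks with no two consecutive blocks of type $2$; this is its block decomposition. *)

theory Defs
  imports Main
begin

definition hval :: "nat list \<Rightarrow> nat" where
  "hval xs = (\<Sum>i<length xs. xs ! i * 2 ^ (length xs - 1 - i))"

definition is_hyperexp :: "nat \<Rightarrow> nat list \<Rightarrow> bool" where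
  "is_hyperexp m xs \<longleftrightarrow> set xs \<subseteq> {0,1,2} \<and> (xs \<noteq> [] \<longrightarrow> hd xs \<noteq> 0) \<and> hval xs = m"

definition hb :: "nat \<Rightarrow> nat" where
  "hb m = card {xs. is_hyperexp m xs}"

fun block_word :: "nat \<times> nat \<Rightarrow> nat list" where
  "block_word (ty, t) = (if ty = 1 then replicate t 1 @ [2] else replicate t 2)"

definition valid_blocks :: "(nat \<times> nat) list \<Rightarrow> bool" where
  "valid_blocks bs \<longleftrightarrow> (\<forall>b\<in>set bs. fst b \<in> {1,2} \<and> snd b \<ge> 1) \<and>
     (\<forall>i. Suc i < length bs \<longrightarrow> \<not> (fst (bs ! i) = 2 \<and> fst (bs ! Suc i) = 2))"

definition block_len :: "nat \<times> nat \<Rightarrow> int" where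
  "block_len b = int (length (block_word b))"

definition bfun :: "nat \<Rightarrow> int \<Rightarrow> int \<Rightarrow> int \<Rightarrow> int" where
  "bfun ty \<alpha> \<beta> \<sigma> = (if ty = 1 then \<alpha> * \<beta> + \<sigma> else \<beta> + \<alpha> * \<sigma>)"

definition sfun :: "nat \<Rightarrow> int \<Rightarrow> int \<Rightarrow> int \<Rightarrow> int" where
  "sfun ty \<alpha> \<beta> \<sigma> = (if ty = 1 then (\<alpha> - 1) * \<beta> + \<sigma> else \<sigma>)"

definition hk_step :: "nat \<times> nat \<Rightarrow> int \<times> int \<Rightarrow> int \<times> int" where
  "hk_step b hk = (bfun (fst b) (block_len b) (fst hk) (snd hk),
                   sfun (fst b) (block_len b) (fst hk) (snd hk))"

text \<open>(h_r, k_r): blocks processed from the last one to the first, starting at (1,1).\<close>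
definition hk :: "(nat \<times> nat) list \<Rightarrow> int \<times> int" where
  "hk bs = foldr hk_step bs (1, 1)"

end

theory Submission
  imports Defs
begin

lemma hval_Nil[simp]: "hval [] = 0" by (simp add: hval_def)

lemma hval_Cons: "hval (x#xs) = x * 2 ^ length xs + hval xs"
  unfolding hval_def length_Cons by (simp del: sum.lessThan_Suc add: sum.lessThan_Suc_shift)

lemma hval_snoc[simp]: "hval (xs @ [x]) = 2 * hval xs + x"
  by (induction xs) (auto simp: hval_Cons algebra_simps)

definition E :: "nat \<Rightarrow> nat list set" where "E m = {xs. is_hyperexp m xs}"

lemma hval_pos: "xs \<noteq> [] \<Longrightarrow> hd xs \<noteq> 0 \<Longrightarrow> hval xs > 0"
  by (cases xs) (auto simp: hval_Cons)

lemma E0: "E 0 = {[]}"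
  using hval_pos by (auto simp: E_def is_hyperexp_def) fastforce

lemma E_odd: "E (2*j+1) = (\<lambda>ys. ys@[1]) ` E j"
proof
  show "E (2*j+1) \<subseteq> (\<lambda>ys. ys@[1]) ` E j"
  proof
    fix xs assume xs: "xs \<in> E (2*j+1)"
    then have "xs \<noteq> []" by (auto simp: E_def is_hyperexp_def)
    then obtain ys d where xs_eq: "xs = ys @ [d]" by (cases xs rule: rev_cases) auto
    with xs have d: "d \<in> {0,1,2}" and v: "2*hval ys + d = 2*j+1"
      and h: "hd xs \<noteq> 0" and s: "set ys \<subseteq> {0,1,2}"
      by (auto simp: E_def is_hyperexp_def)
    from d v have "d = 1" by (auto; presburger)
    with v have "hval ys = j" by simp
    moreover have "ys \<noteq> [] \<longrightarrow> hd ys \<noteq> 0" using h xs_eq by auto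
    ultimately have "ys \<in> E j" using s by (auto simp: E_def is_hyperexp_def)
    then show "xs \<in> (\<lambda>ys. ys@[1]) ` E j" using xs_eq \<open>d = 1\<close> by auto
  qed
next
  show "(\<lambda>ys. ys@[1]) ` E j \<subseteq> E (2*j+1)"
    by (auto simp: E_def is_hyperexp_def hd_append hval_Cons split: if_splits)
qed

lemma E_even: "E (2*j+2) = (\<lambda>ys. ys@[0]) ` E (j+1) \<union> (\<lambda>ys. ys@[2]) ` E j"
proof
  show "E (2*j+2) \<subseteq> (\<lambda>ys. ys@[0]) ` E (j+1) \<union> (\<lambda>ys. ys@[2]) ` E j"
  proof
    fix xs assume xs: "xs \<in> E (2*j+2)"
    then have "xs \<noteq> []" by (auto simp: E_def is_hyperexp_def)
    then obtain ys d where xs_eq: "xs = ys @ [d]" by (cases xs rule: rev_cases) auto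
    with xs have d: "d \<in> {0,1,2}" and v: "2*hval ys + d = 2*j+2"
      and h: "hd xs \<noteq> 0" and s: "set ys \<subseteq> {0,1,2}"
      by (auto simp: E_def is_hyperexp_def)
    have hy: "ys \<noteq> [] \<longrightarrow> hd ys \<noteq> 0" using h xs_eq by auto
    from d v have "d = 0 \<or> d = 2" by (auto; presburger)
    then show "xs \<in> (\<lambda>ys. ys@[0]) ` E (j+1) \<union> (\<lambda>ys. ys@[2]) ` E j"
    proof
      assume "d = 0"
      with v have "hval ys = j+1" by simp
      then have "ys \<in> E (j+1)" using s hy by (auto simp: E_def is_hyperexp_def)
      then show ?thesis using xs_eq \<open>d = 0\<close> by auto
    next
      assume "d = 2"
      with v have "hval ys = j" by simp
      then have "ys \<in> E j" using s hy by (auto simp: E_def is_hyperexp_def)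
      then show ?thesis using xs_eq \<open>d = 2\<close> by auto
    qed
  qed
next
  have "(\<lambda>ys. ys@[0]) ` E (j+1) \<subseteq> E (2*j+2)"
  proof
    fix xs assume "xs \<in> (\<lambda>ys. ys@[0]) ` E (j+1)"
    then obtain ys where ys: "ys \<in> E (j+1)" "xs = ys@[0]" by auto
    then have "ys \<noteq> []" by (auto simp: E_def is_hyperexp_def)
    then show "xs \<in> E (2*j+2)" using ys by (auto simp: E_def is_hyperexp_def hd_append hval_Cons split: if_splits)
  qed
  moreover have "(\<lambda>ys. ys@[2]) ` E j \<subseteq> E (2*j+2)"
    by (auto simp: E_def is_hyperexp_def hd_append hval_Cons split: if_splits)
  ultimately show "(\<lambda>ys. ys@[0]) ` E (j+1) \<union> (\<lambda>ys. ys@[2]) ` E j \<subseteq> E (2*j+2)" by blast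
qed

lemma finite_E: "finite (E m)"
proof (induction m rule: less_induct)
  case (less m)
  consider "m = 0" | j where "m = 2*j+1" | j where "m = 2*j+2"
  proof -
    have "m = 0 \<or> (\<exists>j. m = 2*j+1) \<or> (\<exists>j. m = 2*j+2)" by presburger
    then show ?thesis using that by blast
  qed
  then show ?case
  proof cases
    case 1 then show ?thesis by (simp add: E0)
  next
    case (2 j)
    have "j < m" using 2 by simp
    then have "finite (E j)" by (rule less.IH)
    then have "finite (E (2*j+1))" by (simp only: E_odd) simp
    then show ?thesis using 2 by simp
  next
    case (3 j)
    have "j < m" "j+1 < m" using 3 by simp_all
    then have "finite (E j)" "finite (E (j+1))" by (auto intro: less.IH)
    then have "finite (E (2*j+2))" by (simp only: E_even) simp
    then show ?thesis using 3 by simp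
  qed
qed

lemma hb0: "hb 0 = 1" by (simp add: hb_def E0[unfolded E_def])

lemma hb_odd: "hb (2*j+1) = hb j"
proof -
  have "hb (2*j+1) = card (E (2*j+1))" by (simp add: hb_def E_def)
  also have "\<dots> = card (E j)" unfolding E_odd
    by (rule card_image) (auto simp: inj_on_def)
  finally show ?thesis by (simp add: hb_def E_def)
qed

lemma hb1: "hb 1 = 1" using hb_odd[of 0] hb0 by simp
lemma hb1': "hb (Suc 0) = Suc 0" using hb1 by simp

lemma hb_even: "hb (2*j+2) = hb (j+1) + hb j"
proof -
  have "hb (2*j+2) = card (E (2*j+2))" by (simp add: hb_def E_def)
  also have "\<dots> = card ((\<lambda>ys. ys@[0]) ` E (j+1)) + card ((\<lambda>ys. ys@[2]) ` E j)"
    unfolding E_even by (rule card_Un_disjoint) (auto simp: finite_E)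
  also have "\<dots> = card (E (j+1)) + card (E j)"
    by (subst card_image, simp add: inj_on_def)+ simp
  finally show ?thesis by (simp add: hb_def E_def)
qed

type_synonym mat = "int \<times> int \<times> int \<times> int"

fun mulM :: "mat \<Rightarrow> mat \<Rightarrow> mat" where
  "mulM (a,b,c,d) (e,f,g,h) = (a*e+b*g, a*f+b*h, c*e+d*g, c*f+d*h)"

lemma mulM_assoc: "mulM (mulM x y) z = mulM x (mulM y z)"
  by (cases x rule: prod_cases4; cases y rule: prod_cases4; cases z rule: prod_cases4)
     (simp add: algebra_simps)

lemma mulM_id1[simp]: "mulM (1,0,0,1) x = x"
  by (cases x rule: prod_cases4) simp

definition Md :: "nat \<Rightarrow> mat" where
  "Md d = (if d = 1 then (1,0,1,1) else (1,1,0,1))"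

fun A :: "nat list \<Rightarrow> mat" where
  "A [] = (1,0,0,1)"
| "A (d#w) = mulM (A w) (Md d)"

lemma A_append: "A (w @ v) = mulM (A v) (A w)"
proof (induction w)
  case Nil then show ?case
    by (cases "A v" rule: prod_cases4) simp
next
  case (Cons x w) then show ?case by (simp add: mulM_assoc)
qed

lemma A_snoc: "A (w @ [d]) = mulM (Md d) (A w)"
  by (simp add: A_append)

lemma hb_A: "set w \<subseteq> {1,2} \<Longrightarrow> A w = (a,b,c,d) \<Longrightarrow>
   int (hb (hval w)) = a + b \<and> int (hb (hval w + 1)) = c + d"
proof (induction w arbitrary: a b c d rule: rev_induct)
  case Nil then show ?case by (simp add: hb0 hb1')
next
  case (snoc x w)
  obtain a' b' c' d' where Aw: "A w = (a',b',c',d')" by (cases "A w" rule: prod_cases4)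
  from snoc Aw have IH: "int (hb (hval w)) = a' + b'" "int (hb (hval w + 1)) = c' + d'" by auto
  from snoc have "x = 1 \<or> x = 2" by auto
  then show ?case
  proof
    assume x: "x = 1"
    with snoc.prems Aw have "(a,b,c,d) = (a', b', a'+c', b'+d')" by (simp add: A_snoc Md_def)
    moreover have "hb (hval (w@[x])) = hb (hval w)" using x hb_odd[of "hval w"] by simp
    moreover have "hb (hval (w@[x]) + 1) = hb (hval w + 1) + hb (hval w)"
      using x hb_even[of "hval w"] by simp
    ultimately show ?thesis using IH by simp
  next
    assume x: "x = 2"
    with snoc.prems Aw have "(a,b,c,d) = (a'+c', b'+d', c', d')" by (simp add: A_snoc Md_def)
    moreover have "hb (hval (w@[x])) = hb (hval w + 1) + hb (hval w)"
      using x hb_even[of "hval w"] by simp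
    moreover have "hb (hval (w@[x]) + 1) = hb (hval w + 1)"
      using x hb_odd[of "hval w + 1"] by (simp add: algebra_simps)
    ultimately show ?thesis using IH by simp
  qed
qed

lemma A_rep1: "A (replicate t 1) = (1, 0, int t, 1)"
  by (induction t) (auto simp: Md_def)

lemma A_rep1': "A (replicate t (Suc 0)) = (1, 0, int t, 1)"
  using A_rep1 by simp

lemma A_rep2: "A (replicate t 2) = (1, int t, 0, 1)"
  by (induction t) (auto simp: Md_def)

lemma hk_A: "A (concat (map block_word bs)) = (a,b,c,d) \<Longrightarrow> hk bs = (a+b, a)"
proof (induction bs arbitrary: a b c d)
  case Nil then show ?case by (simp add: hk_def)
next
  case (Cons bl bs)
  obtain a' b' c' d' where Ar: "A (concat (map block_word bs)) = (a',b',c',d')"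
    by (cases "A (concat (map block_word bs))" rule: prod_cases4)
  with Cons.IH have IH: "hk bs = (a'+b', a')" by simp
  have hkc: "hk (bl#bs) = hk_step bl (hk bs)" by (simp add: hk_def)
  obtain ty t where bl: "bl = (ty,t)" by (cases bl)
  show ?case
  proof (cases "ty = 1")
    case True
    have "A (block_word bl) = (1 + int t, 1, int t, 1)"
      using True bl by (simp add: A_append A_rep1 A_rep1' Md_def)
    then have "(a,b,c,d) = mulM (a',b',c',d') (1 + int t, 1, int t, 1)"
      using Cons.prems Ar by (simp add: A_append)
    then have ab: "a = a' * (1 + int t) + b' * int t" "b = a' + b'" by simp_all
    have len: "block_len bl = int t + 1" using True bl by (simp add: block_len_def)
    have "hk (bl#bs) = ((int t + 1) * (a'+b') + a', (int t + 1 - 1) * (a'+b') + a')"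
      using hkc IH True bl len by (simp add: hk_step_def bfun_def sfun_def)
    then show ?thesis using ab by (simp add: algebra_simps)
  next
    case False
    have "A (block_word bl) = (1, int t, 0, 1)"
      using False bl by (simp add: A_rep2)
    then have "(a,b,c,d) = mulM (a',b',c',d') (1, int t, 0, 1)"
      using Cons.prems Ar by (auto simp: A_append algebra_simps)
    then have ab: "a = a'" "b = a' * int t + b'" by simp_all
    have len: "block_len bl = int t" using False bl by (simp add: block_len_def)
    have "hk (bl#bs) = ((a'+b') + int t * a', a')"
      using hkc IH False bl len by (simp add: hk_step_def bfun_def sfun_def)
    then show ?thesis using ab by (simp add: algebra_simps)
  qed
qed

theorem mainTheorem13:
  fixes n :: nat and w :: "nat list" and bs :: "(nat \<times> nat) list"
  assumes "even n"
    and "is_hyperexp n w" and "0 \<notin> set w"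
    and "valid_blocks bs" and "concat (map block_word bs) = w"
  shows "int (hb n) = fst (hk bs)"
proof -
  obtain a b c d where Aw: "A w = (a,b,c,d)" by (cases "A w" rule: prod_cases4)
  have s: "set w \<subseteq> {1,2}" using assms(2,3) by (auto simp: is_hyperexp_def)
  have n: "hval w = n" using assms(2) by (simp add: is_hyperexp_def)
  have "int (hb n) = a + b" using hb_A[OF s Aw] n by simp
  moreover have "hk bs = (a+b, a)" using hk_A Aw assms(5) by simp
  ultimately show ?thesis by simp
qed

end
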